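(* Let $\beta\in\mathcal{A}$ and $\lambda\in N_\beta$ with $\lambda_\beta=-1$ and $\sigma_X(-\mathcal{A}\lambda)<\infty$. Then the dual cone of $C_X(\mathcal{A},\lambda)$ (in $\mathbb{R}^{\mathcal{A}}$ with the standard inner product) is \[C_X(\mathcal{A},\lambda)^*=\Big\{v\in\mathbb{R}^{\mathcal{A}}_+:\ \exp(\sigma_X(-\mathcal{A}\lambda))\prod_{\alpha\in\lambda^+}v_\alpha^{\lambda_\alpha}\ge v_\beta\Big\}.\]
   Context: $X\subset\mathbb{R}^n$ is a nonempty closed convex set and $\mathcal{A}\subset\mathbb{R}^n$ a nonempty finite set. $\mathbb{R}^{\mathcal{A}}$ denotes real vectors indexed by $\mathcal{A}$. $\mathcal{A}\nu=\sum_\alpha\alpha\nu_\alpha$. $\sigma_X(y)=\sup\{y^Tx:x\in X\}$. $N_\beta=\{\nu\in\mathbb{R}^{\mathcal{A}}:\nu_\alpha\ge0\ \forall\alpha\neq\beta,\ \sum_\alpha\nu_\alpha=0\}$. $\lambda^+=\{\alpha:\lambda_\alpha>0\}$. For $\lambda\in N_\beta$ with $\lambda_\beta=-1$ and $\sigma_X(-\mathcal{A}\lambda)<\infty$, the $\lambda$-witnessed AGE cone is $C_X(\mathcal{A},\lambda)=\{c\in\mathbb{R}^{\mathcal{A}}: c_\alpha\ge0\ \forall\alpha\neq\beta,\ \prod_{\alpha\in\lambda^+}(c_\alpha/\lambda_\alpha)^{\lambda_\alpha}\ge -c_\beta\exp(\sigma_X(-\mathcal{A}\lambda))\}$. The dual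 cone of $K$ is $K^*=\{v:v^Tc\ge0\ \forall c\in K\}$. *)

theory Defs
  imports "HOL-Analysis.Analysis"
begin

text \<open>Vectors in R^A are functions on points of R^n that vanish outside A.\<close>
definition RA :: "(real^'n) set \<Rightarrow> ((real^'n) \<Rightarrow> real) set" where
  "RA A = {c. \<forall>\<alpha>. \<alpha> \<notin> A \<longrightarrow> c \<alpha> = 0}"

definition Amul :: "(real^'n) set \<Rightarrow> ((real^'n) \<Rightarrow> real) \<Rightarrow> real^'n" where
  "Amul A \<nu> = (\<Sum>\<alpha>\<in>A. \<nu> \<alpha> *\<^sub>R \<alpha>)"

text \<open>Support function; meaningful (finite) when the set of values is bounded above.\<close>
definition sigma :: "(real^'n) set \<Rightarrow> real^'n \<Rightarrow> real" where
  "sigma X y = Sup ((\<lambda>x. y \<bullet> x) ` X)"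

definition sigma_finite :: "(real^'n) set \<Rightarrow> real^'n \<Rightarrow> bool" where
  "sigma_finite X y \<longleftrightarrow> bdd_above ((\<lambda>x. y \<bullet> x) ` X)"

definition Nbeta :: "(real^'n) set \<Rightarrow> real^'n \<Rightarrow> ((real^'n) \<Rightarrow> real) set" where
  "Nbeta A \<beta> = {\<nu> \<in> RA A. (\<forall>\<alpha>\<in>A. \<alpha> \<noteq> \<beta> \<longrightarrow> \<nu> \<alpha> \<ge> 0) \<and> (\<Sum>\<alpha>\<in>A. \<nu> \<alpha>) = 0}"

definition pos_supp :: "(real^'n) set \<Rightarrow> ((real^'n) \<Rightarrow> real) \<Rightarrow> (real^'n) set" where
  "pos_supp A lam = {\<alpha> \<in> A. lam \<alpha> > 0}"

definition AGE_cone :: "(real^'n) set \<Rightarrow> (real^'n) set \<Rightarrow> real^'n \<Rightarrow> ((real^'n) \<Rightarrow> real)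
    \<Rightarrow> ((real^'n) \<Rightarrow> real) set" where
  "AGE_cone X A \<beta> lam = {c \<in> RA A. (\<forall>\<alpha>\<in>A. \<alpha> \<noteq> \<beta> \<longrightarrow> c \<alpha> \<ge> 0) \<and>
      (\<Prod>\<alpha>\<in>pos_supp A lam. (c \<alpha> / lam \<alpha>) powr (lam \<alpha>))
        \<ge> - c \<beta> * exp (sigma X (- Amul A lam))}"

definition dual_cone :: "(real^'n) set \<Rightarrow> ((real^'n) \<Rightarrow> real) set \<Rightarrow> ((real^'n) \<Rightarrow> real) set" where
  "dual_cone A K = {v \<in> RA A. \<forall>c\<in>K. (\<Sum>\<alpha>\<in>A. v \<alpha> * c \<alpha>) \<ge> 0}"

end

theory Submission
  imports Defs
begin

lemma wamgm:
  fixes x w :: "'a \<Rightarrow> real"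
  assumes S: "finite S" "S \<noteq> {}" and w: "\<And>i. i\<in>S \<Longrightarrow> w i > 0" and sw: "sum w S = 1"
    and x: "\<And>i. i\<in>S \<Longrightarrow> x i \<ge> 0"
  shows "(\<Prod>i\<in>S. x i powr w i) \<le> (\<Sum>i\<in>S. w i * x i)"
proof (cases "\<exists>i\<in>S. x i = 0")
  case True
  then have "(\<Prod>i\<in>S. x i powr w i) = 0" using S by auto
  moreover have "(\<Sum>i\<in>S. w i * x i) \<ge> 0" using w x by (intro sum_nonneg) (meson less_imp_le mult_nonneg_nonneg)
  ultimately show ?thesis by simp
next
  case False
  have pos: "\<And>i. i\<in>S \<Longrightarrow> x i > 0" using False x by force
  have "ln (\<Sum>i \<in> S. w i *\<^sub>R x i) \<ge> (\<Sum>i \<in> S. w i * ln (x i))"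
  proof (intro concave_on_sum)
    show "concave_on {0<..} ln" by (simp add: ln_concave)
    show "\<And>i. i\<in>S \<Longrightarrow> x i \<in> {0<..}" using pos by auto
  qed (use S w sw in \<open>auto intro: less_imp_le\<close>)
  moreover have "(\<Sum>i \<in> S. w i *\<^sub>R x i) > 0"
    using S w pos by (simp add: sum_pos)
  ultimately have "(\<Sum>i \<in> S. w i * x i) \<ge> exp (\<Sum>i \<in> S. w i * ln (x i))"
    using ln_ge_iff by auto
  also have "exp (\<Sum>i \<in> S. w i * ln (x i)) = (\<Prod>i\<in>S. exp (w i * ln (x i)))"
    using S(1) by (simp add: exp_sum)
  also have "\<dots> = (\<Prod>i\<in>S. x i powr w i)"
    using pos by (intro prod.cong) (auto simp: powr_def mult.commute dest: pos less_imp_neq)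
  finally show ?thesis .
qed

theorem proposition4p7:
  fixes X A :: "(real^'n) set" and \<beta> :: "real^'n" and lam :: "(real^'n) \<Rightarrow> real"
  assumes "X \<noteq> {}" and "closed X" and "convex X"
    and "finite A" and "A \<noteq> {}"
    and "\<beta> \<in> A" and "lam \<in> Nbeta A \<beta>" and "lam \<beta> = -1"
    and "sigma_finite X (- Amul A lam)"
  shows "dual_cone A (AGE_cone X A \<beta> lam) =
    {v \<in> RA A. (\<forall>\<alpha>\<in>A. v \<alpha> \<ge> 0) \<and>
       exp (sigma X (- Amul A lam)) * (\<Prod>\<alpha>\<in>pos_supp A lam. v \<alpha> powr lam \<alpha>) \<ge> v \<beta>}"
proof -
  define P where "P = pos_supp A lam"
  define E where "E = exp (sigma X (- Amul A lam))"
  have Epos: "E > 0" unfolding E_def by simp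
  have fA: "finite A" and bA: "\<beta> \<in> A" by fact+
  have lamnn: "\<And>a. a \<in> A \<Longrightarrow> a \<noteq> \<beta> \<Longrightarrow> lam a \<ge> 0" and lams: "sum lam A = 0"
    using assms(7) unfolding Nbeta_def by auto
  have PA: "P \<subseteq> A" and bP: "\<beta> \<notin> P" and fP: "finite P"
    using assms(8) fA unfolding P_def pos_supp_def by (auto intro: finite_subset)
  have lamP: "\<And>a. a \<in> P \<Longrightarrow> lam a > 0" unfolding P_def pos_supp_def by auto
  have split: "\<And>f::real^'n \<Rightarrow> real. (\<And>x. x\<in>A \<Longrightarrow> x\<notin>P \<Longrightarrow> x\<noteq>\<beta> \<Longrightarrow> f x = 0) \<Longrightarrow> sum f A = sum f P + f \<beta>"
  proof -
    fix f :: "real^'n \<Rightarrow> real"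
    assume h: "\<And>x. x\<in>A \<Longrightarrow> x\<notin>P \<Longrightarrow> x\<noteq>\<beta> \<Longrightarrow> f x = 0"
    have "sum f A = sum f (insert \<beta> P)"
      by (rule sum.mono_neutral_right) (use h PA bA fA in auto)
    also have "\<dots> = sum f P + f \<beta>" using bP fP by simp
    finally show "sum f A = sum f P + f \<beta>" .
  qed
  have sumP: "sum lam P = 1"
  proof -
    have "sum lam A = sum lam P + lam \<beta>"
      using lamnn by (intro split) (force simp: P_def pos_supp_def)
    then show ?thesis using lams assms(8) by simp
  qed
  have Pne: "P \<noteq> {}" using sumP by auto
  show ?thesis
    unfolding P_def[symmetric] E_def[symmetric]
  proof (intro equalityI subsetI)
    fix v assume vd: "v \<in> dual_cone A (AGE_cone X A \<beta> lam)"
    have vRA: "v \<in> RA A" using vd unfolding dual_cone_def by auto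
    have vd': "\<And>c. c \<in> AGE_cone X A \<beta> lam \<Longrightarrow> 0 \<le> (\<Sum>x\<in>A. v x * c x)"
      using vd unfolding dual_cone_def by auto
    have vnn: "v a \<ge> 0" if aA: "a \<in> A" for a
    proof -
      define c where "c = (\<lambda>x. if x = a then 1 else 0::real)"
      have "c \<in> AGE_cone X A \<beta> lam"
        unfolding AGE_cone_def RA_def P_def[symmetric] E_def[symmetric]
        using aA Epos by (auto simp: c_def intro!: prod_nonneg order.trans[OF _ prod_nonneg])
      from vd'[OF this] show ?thesis using aA fA by (simp add: c_def if_distrib cong: if_cong)
    qed
    have key: "v \<beta> \<le> E * (\<Prod>a\<in>P. (v a + e) powr lam a)" if e: "e > 0" for e
    proof -
      define R where "R = (\<Prod>a\<in>P. (v a + e) powr lam a)"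
      have vpos: "\<And>a. a \<in> P \<Longrightarrow> v a + e > 0" using vnn PA e by force
      have Rpos: "R > 0" unfolding R_def by (intro prod_pos) (metis vpos less_irrefl powr_gt_zero)
      define c where "c = (\<lambda>x. if x \<in> P then lam x / (v x + e) else if x = \<beta> then -1/(E*R) else 0)"
      have prodc: "(\<Prod>a\<in>P. (c a / lam a) powr lam a) = 1 / R"
      proof -
        have "(\<Prod>a\<in>P. (c a / lam a) powr lam a) = (\<Prod>a\<in>P. 1 / (v a + e) powr lam a)"
          proof (intro prod.cong refl)
          fix x assume xP: "x \<in> P"
          have "c x / lam x = 1 / (v x + e)" using lamP[OF xP] vpos[OF xP] xP by (simp add: c_def)
          then show "(c x / lam x) powr lam x = 1 / (v x + e) powr lam x" by (simp add: powr_divide)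
        qed
        also have "\<dots> = 1 / R" unfolding R_def by (simp add: prod_dividef)
        finally show ?thesis .
      qed
      have "c \<in> AGE_cone X A \<beta> lam"
        unfolding AGE_cone_def RA_def P_def[symmetric] E_def[symmetric]
      proof (intro CollectI conjI ballI impI allI)
        show "x \<notin> A \<Longrightarrow> c x = 0" for x using PA bA by (auto simp: c_def)
        show "x \<in> A \<Longrightarrow> x \<noteq> \<beta> \<Longrightarrow> 0 \<le> c x" for x
          using lamP vpos by (auto simp: c_def intro: less_imp_le)
        show "- c \<beta> * E \<le> (\<Prod>a\<in>P. (c a / lam a) powr lam a)"
          unfolding prodc using Epos Rpos bP by (simp add: c_def)
      qed
      from vd'[OF this] have "0 \<le> (\<Sum>x\<in>A. v x * c x)" .
      also have "\<dots> = (\<Sum>x\<in>P. v x * c x) + v \<beta> * c \<beta>"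
        by (intro split) (auto simp: c_def)
      also have "(\<Sum>x\<in>P. v x * c x) \<le> (\<Sum>x\<in>P. lam x)"
      proof (intro sum_mono)
        fix x assume xP: "x \<in> P"
        have "v x / (v x + e) \<le> 1" using vpos[OF xP] e by simp
        then have "lam x * (v x / (v x + e)) \<le> lam x * 1"
          using lamP[OF xP] by (intro mult_left_mono) auto
        then show "v x * c x \<le> lam x" using xP by (simp add: c_def mult.commute)
      qed
      finally have "0 \<le> 1 - v \<beta> / (E * R)" using sumP bP by (simp add: c_def)
      then show ?thesis using Epos Rpos unfolding R_def[symmetric] by (simp add: field_simps)
    qed
    have "v \<beta> \<le> E * (\<Prod>a\<in>P. v a powr lam a)"
    proof (rule tendsto_le[OF trivial_limit_at_right_real])
      show "((\<lambda>e. E * (\<Prod>a\<in>P. (v a + e) powr lam a)) \<longlongrightarrow> E * (\<Prod>a\<in>P. v a powr lam a)) (at_right 0)"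
      proof (intro tendsto_mult tendsto_const tendsto_prod)
        fix a assume aP: "a \<in> P"
        have t: "((\<lambda>e. v a + e) \<longlongrightarrow> v a + 0) (at_right 0)"
          by (intro tendsto_add tendsto_const tendsto_ident_at)
        have ev: "eventually (\<lambda>e. v a + e \<ge> 0) (at_right (0::real))"
          proof (rule eventually_mono[OF eventually_at_right_less])
          fix e :: real assume "0 < e" then show "v a + e \<ge> 0" using vnn[of a] aP PA by auto
        qed
        show "((\<lambda>e. (v a + e) powr lam a) \<longlongrightarrow> v a powr lam a) (at_right 0)"
          using tendsto_powr'[OF t tendsto_const, of "lam a"] lamP[OF aP] ev by simp
      qed
      show "\<forall>\<^sub>F e in at_right 0. v \<beta> \<le> E * (\<Prod>a\<in>P. (v a + e) powr lam a)"
        by (rule eventually_mono[OF eventually_at_right_less]) (rule key)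
    qed simp
    then show "v \<in> {v \<in> RA A. (\<forall>\<alpha>\<in>A. 0 \<le> v \<alpha>) \<and> v \<beta> \<le> E * (\<Prod>\<alpha>\<in>P. v \<alpha> powr lam \<alpha>)}"
      using vRA vnn by auto
  next
    fix v assume "v \<in> {v \<in> RA A. (\<forall>\<alpha>\<in>A. 0 \<le> v \<alpha>) \<and> v \<beta> \<le> E * (\<Prod>\<alpha>\<in>P. v \<alpha> powr lam \<alpha>)}"
    then have vRA: "v \<in> RA A" and vnn: "\<And>a. a \<in> A \<Longrightarrow> v a \<ge> 0"
      and vb: "v \<beta> \<le> E * (\<Prod>\<alpha>\<in>P. v \<alpha> powr lam \<alpha>)" by auto
    show "v \<in> dual_cone A (AGE_cone X A \<beta> lam)"
      unfolding dual_cone_def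
    proof (intro CollectI conjI vRA ballI)
      fix c assume "c \<in> AGE_cone X A \<beta> lam"
      then have cnn: "\<And>a. a \<in> A \<Longrightarrow> a \<noteq> \<beta> \<Longrightarrow> c a \<ge> 0"
        and cq: "- c \<beta> * E \<le> (\<Prod>a\<in>P. (c a / lam a) powr lam a)"
        unfolding AGE_cone_def P_def[symmetric] E_def[symmetric] by auto
      have sub: "insert \<beta> P \<subseteq> A" using PA bA by auto
      have "(\<Sum>x\<in>A. v x * c x) = (\<Sum>x\<in>A - insert \<beta> P. v x * c x) + (\<Sum>x\<in>insert \<beta> P. v x * c x)"
        using sum.subset_diff[OF sub fA] .
      also have "(\<Sum>x\<in>insert \<beta> P. v x * c x) = v \<beta> * c \<beta> + (\<Sum>x\<in>P. v x * c x)"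
        using bP fP by simp
      finally have eq: "(\<Sum>x\<in>A. v x * c x) = (\<Sum>x\<in>A - insert \<beta> P. v x * c x) + (v \<beta> * c \<beta> + (\<Sum>x\<in>P. v x * c x))" .
      have r0: "(\<Sum>x\<in>A - insert \<beta> P. v x * c x) \<ge> 0"
        using vnn cnn by (intro sum_nonneg mult_nonneg_nonneg) auto
      have p0: "(\<Sum>x\<in>P. v x * c x) \<ge> 0"
        using vnn cnn PA bP by (intro sum_nonneg mult_nonneg_nonneg) auto
      have "v \<beta> * c \<beta> + (\<Sum>x\<in>P. v x * c x) \<ge> 0"
      proof (cases "c \<beta> \<ge> 0")
        case True then show ?thesis using p0 vnn[OF bA] by simp
      next
        case False
        define G where "G = (\<Prod>\<alpha>\<in>P. v \<alpha> powr lam \<alpha>)"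
        have G0: "G \<ge> 0" unfolding G_def by (intro prod_nonneg) auto
        have "(\<Prod>a\<in>P. (v a * c a / lam a) powr lam a) \<le> (\<Sum>a\<in>P. lam a * (v a * c a / lam a))"
          using fP Pne lamP sumP vnn cnn PA bP
          by (intro wamgm) (auto intro!: divide_nonneg_pos mult_nonneg_nonneg)
        also have "\<dots> = (\<Sum>a\<in>P. v a * c a)"
          using lamP by (intro sum.cong) (force+)
        also have "(\<Prod>a\<in>P. (v a * c a / lam a) powr lam a) = G * (\<Prod>a\<in>P. (c a / lam a) powr lam a)"
          unfolding G_def prod.distrib[symmetric] by (intro prod.cong) (auto simp: powr_mult[symmetric])
        finally have h1: "G * (\<Prod>a\<in>P. (c a / lam a) powr lam a) \<le> (\<Sum>a\<in>P. v a * c a)" .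
        have "G * (- c \<beta> * E) \<le> G * (\<Prod>a\<in>P. (c a / lam a) powr lam a)"
          using G0 cq by (intro mult_left_mono)
        moreover have "v \<beta> * (- c \<beta>) \<le> (E * G) * (- c \<beta>)"
          using vb False unfolding G_def by (intro mult_right_mono) auto
        ultimately show ?thesis using h1 by (simp add: algebra_simps)
      qed
      then show "0 \<le> (\<Sum>x\<in>A. v x * c x)" using eq r0 by linarith
    qed
  qed
qed

end
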